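(* Let $T$ be a finite tree and let $P=p_0p_1\dots p_k$ ($k\ge1$) be a path in $T$ such that each of $p_1,\dots,p_{k-1}$ has degree $2$ in $T$. Let $B$ be the vertex set of the component containing $p_k$ of the graph obtained from $T$ by deleting the edges of $P$. Let $T'$ be the tree obtained from $T$ by deleting all edges between $p_k$ and $\Gamma(p_k)\setminus\{p_{k-1}\}$ and adding the edges between $p_0$ and $\Gamma(p_k)\setminus\{p_{k-1}\}$ instead. Then for every $\ell\ge1$, \[\omega_{\ell}(p_0,T[B\cup P])-\omega_{\ell}(p_0,P)\leq \omega_{\ell}(p_0,T'[B\cup P])-\omega_{\ell}(p_0,P).\]
   Context: $\Gamma(v)$ is the set of neighbours of $v$ in $T$. For a graph $G$ containing the vertices of $B$ and $P$, $G[B\cup P]$ is the subgraph of $G$ induced by $B\cup\{p_0,\dots,p_k\}$. For a graph $G$, a vertex $x$ and $\ell\ge1$, $\omega_\ell(x,G)$ is the number of walks of length $\ell$ in $G$ starting at $x$. $P$ is regarded as a graph (the path). *)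

theory Defs
  imports Main
begin

type_synonym 'a graph = "'a set \<times> 'a set set"

definition wf_graph :: "'a graph \<Rightarrow> bool" where
  "wf_graph G \<longleftrightarrow> (\<forall>e\<in>snd G. \<exists>u v. u \<noteq> v \<and> e = {u, v} \<and> u \<in> fst G \<and> v \<in> fst G)"

definition nbrs :: "'a graph \<Rightarrow> 'a \<Rightarrow> 'a set" where
  "nbrs G v = {u \<in> fst G. {v, u} \<in> snd G}"

definition is_walk :: "'a graph \<Rightarrow> 'a list \<Rightarrow> bool" where
  "is_walk G ws \<longleftrightarrow> ws \<noteq> [] \<and> set ws \<subseteq> fst G \<and>
     (\<forall>i. Suc i < length ws \<longrightarrow> {ws ! i, ws ! Suc i} \<in> snd G)"

definition reachable :: "'a graph \<Rightarrow> 'a \<Rightarrow> 'a \<Rightarrow> bool" where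
  "reachable G u v \<longleftrightarrow> (\<exists>ws. is_walk G ws \<and> hd ws = u \<and> last ws = v)"

definition connected_graph :: "'a graph \<Rightarrow> bool" where
  "connected_graph G \<longleftrightarrow> (\<forall>u\<in>fst G. \<forall>v\<in>fst G. reachable G u v)"

definition has_cycle :: "'a graph \<Rightarrow> bool" where
  "has_cycle G \<longleftrightarrow> (\<exists>cs. length cs \<ge> 3 \<and> distinct cs \<and> is_walk G cs \<and> {last cs, hd cs} \<in> snd G)"

definition is_tree :: "'a graph \<Rightarrow> bool" where
  "is_tree G \<longleftrightarrow> finite (fst G) \<and> fst G \<noteq> {} \<and> wf_graph G \<and> connected_graph G \<and> \<not> has_cycle G"

definition induced :: "'a graph \<Rightarrow> 'a set \<Rightarrow> 'a graph" where
  "induced G S = (S \<inter> fst G, {e \<in> snd G. e \<subseteq> S})"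

text \<open>omega_l(x, G): number of walks of length l (l edges) starting at x.\<close>
definition walk_count :: "nat \<Rightarrow> 'a \<Rightarrow> 'a graph \<Rightarrow> nat" where
  "walk_count l x G = card {ws. is_walk G ws \<and> length ws = Suc l \<and> hd ws = x}"

definition path_verts :: "(nat \<Rightarrow> 'a) \<Rightarrow> nat \<Rightarrow> 'a set" where
  "path_verts p k = p ` {0..k}"

definition path_edges :: "(nat \<Rightarrow> 'a) \<Rightarrow> nat \<Rightarrow> 'a set set" where
  "path_edges p k = (\<lambda>i. {p i, p (Suc i)}) ` {0..<k}"

definition path_graph :: "(nat \<Rightarrow> 'a) \<Rightarrow> nat \<Rightarrow> 'a graph" where
  "path_graph p k = (path_verts p k, path_edges p k)"

definition comp_B :: "'a graph \<Rightarrow> (nat \<Rightarrow> 'a) \<Rightarrow> nat \<Rightarrow> 'a set" where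
  "comp_B T p k = {v. reachable (fst T, snd T - path_edges p k) (p k) v}"

definition moved_tree :: "'a graph \<Rightarrow> (nat \<Rightarrow> 'a) \<Rightarrow> nat \<Rightarrow> 'a graph" where
  "moved_tree T p k =
     (let N = nbrs T (p k) - {p (k - 1)} in
      (fst T, (snd T - (\<lambda>u. {p k, u}) ` N) \<union> (\<lambda>u. {p 0, u}) ` N))"

end

theory Submission
  imports Defs
begin


lemma walk_single[simp]: "is_walk G [x] \<longleftrightarrow> x \<in> fst G"
  by (auto simp: is_walk_def)

lemma walk_cons2[simp]: "is_walk G (x # y # ys) \<longleftrightarrow> x \<in> fst G \<and> {x,y} \<in> snd G \<and> is_walk G (y # ys)"
proof
  assume a: "is_walk G (x # y # ys)"
  show "x \<in> fst G \<and> {x,y} \<in> snd G \<and> is_walk G (y # ys)"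
  proof (intro conjI)
    show "x \<in> fst G" using a by (auto simp: is_walk_def)
    show "{x,y} \<in> snd G" using a unfolding is_walk_def by (metis length_Cons nth_Cons_0 nth_Cons_Suc zero_less_Suc Suc_less_eq)
    show "is_walk G (y # ys)" using a unfolding is_walk_def
      by (metis (no_types, lifting) Suc_less_eq length_Cons list.discI list.set_intros(2) nth_Cons_Suc subset_code(1))
  qed
next
  assume a: "x \<in> fst G \<and> {x,y} \<in> snd G \<and> is_walk G (y # ys)"
  show "is_walk G (x # y # ys)" unfolding is_walk_def
  proof (intro conjI allI impI)
    show "x # y # ys \<noteq> []" by simp
    show "set (x # y # ys) \<subseteq> fst G" using a by (auto simp: is_walk_def)
    fix i assume "Suc i < length (x # y # ys)"
    then show "{(x # y # ys) ! i, (x # y # ys) ! Suc i} \<in> snd G"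
      using a by (cases i) (auto simp: is_walk_def)
  qed
qed

lemma walk_nonempty: "is_walk G ws \<Longrightarrow> ws \<noteq> []" by (simp add: is_walk_def)

lemma walk_set: "is_walk G ws \<Longrightarrow> set ws \<subseteq> fst G" by (simp add: is_walk_def)

lemma walk_append:
  "is_walk G xs \<Longrightarrow> is_walk G ys \<Longrightarrow> {last xs, hd ys} \<in> snd G \<Longrightarrow> is_walk G (xs @ ys)"
proof (induction xs)
  case Nil then show ?case by (simp add: is_walk_def)
next
  case (Cons x xs)
  show ?case
  proof (cases xs)
    case Nil
    then show ?thesis using Cons.prems by (cases ys) (auto dest: walk_nonempty)
  next
    case (Cons y zs)
    then show ?thesis using Cons.prems Cons.IH by auto
  qed
qed

lemma walk_suffix: "is_walk G (xs @ ys) \<Longrightarrow> ys \<noteq> [] \<Longrightarrow> is_walk G ys"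
proof (induction xs)
  case Nil then show ?case by simp
next
  case (Cons x xs)
  then show ?case by (cases "xs @ ys") auto
qed

lemma walk_prefix: "is_walk G (xs @ ys) \<Longrightarrow> xs \<noteq> [] \<Longrightarrow> is_walk G xs"
proof (induction xs)
  case Nil then show ?case by simp
next
  case (Cons x xs)
  then show ?case by (cases xs) (auto, cases ys, auto)
qed

lemma walk_mono: "is_walk (V, E) ws \<Longrightarrow> E \<subseteq> E' \<Longrightarrow> is_walk (V, E') ws"
  by (auto simp: is_walk_def)

lemma walk_distinct:
  "is_walk G ws \<Longrightarrow> \<exists>ds. is_walk G ds \<and> distinct ds \<and> hd ds = hd ws \<and> last ds = last ws \<and> set ds \<subseteq> set ws"
proof (induction ws)
  case Nil then show ?case by (simp add: is_walk_def)
next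
  case (Cons x xs)
  show ?case
  proof (cases xs)
    case Nil then show ?thesis using Cons.prems by (intro exI[of _ "[x]"]) auto
  next
    case (Cons y ys)
    with Cons.prems have w: "is_walk G xs" and xe: "{x,y} \<in> snd G" and xv: "x \<in> fst G" by auto
    from Cons.IH[OF w] obtain ds where ds: "is_walk G ds" "distinct ds" "hd ds = hd xs" "last ds = last xs" "set ds \<subseteq> set xs" by blast
    have dne: "ds \<noteq> []" using walk_nonempty[OF ds(1)] .
    show ?thesis
    proof (cases "x \<in> set ds")
      case True
      define es where "es = dropWhile (\<lambda>z. z \<noteq> x) ds"
      have split: "ds = takeWhile (\<lambda>z. z \<noteq> x) ds @ es" unfolding es_def by simp
      have ene: "es \<noteq> []" using True unfolding es_def by simp
      have hes: "hd es = x" using hd_dropWhile[of "\<lambda>z. z \<noteq> x" ds] ene unfolding es_def by simp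
      have "is_walk G es" using walk_suffix[of G _ es] ds(1) split ene by metis
      moreover have "distinct es" using ds(2) split by (metis distinct_append)
      moreover have "last es = last ds" using split ene by (metis last_appendR)
      moreover have "set es \<subseteq> set ds" using split by (metis Un_upper2 set_append)
      ultimately show ?thesis using hes ds Cons by (intro exI[of _ es]) auto
    next
      case False
      obtain d ds' where dd: "ds = d # ds'" using dne by (cases ds) auto
      have "d = y" using ds(3) dd Cons by simp
      then have "is_walk G (x # ds)" using dd ds(1) xe xv by simp
      then show ?thesis using False ds dd Cons by (intro exI[of _ "x # ds"]) auto
    qed
  qed
qed

lemma walk_incident:
  assumes "is_walk G ws" "length ws \<ge> 2" "z \<in> set ws"
  shows "\<exists>w. {z, w} \<in> snd G"
proof -
  obtain j where j: "j < length ws" "ws ! j = z" using assms(3) by (metis in_set_conv_nth)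
  show ?thesis
  proof (cases "Suc j < length ws")
    case True
    then show ?thesis using assms(1) j unfolding is_walk_def by metis
  next
    case False
    then obtain i where "j = Suc i" using assms(2) j by (cases j) auto
    then have "{ws ! i, z} \<in> snd G" using assms(1) j unfolding is_walk_def by metis
    then show ?thesis by (metis insert_commute)
  qed
qed

lemma walk_last_edge:
  assumes "is_walk G ws" "length ws \<ge> 2"
  shows "\<exists>w. is_walk G (butlast ws) \<and> hd (butlast ws) = hd ws \<and> last (butlast ws) = w \<and> {w, last ws} \<in> snd G"
proof -
  have sp: "ws = butlast ws @ [last ws]" using assms(2) by (metis append_butlast_last_id list.size(3) not_numeral_le_zero)
  have bne: "butlast ws \<noteq> []" using assms(2) by (cases ws) auto
  have w1: "is_walk G (butlast ws)" using walk_prefix[of G "butlast ws" "[last ws]"] sp assms(1) bne by metis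
  have "hd (butlast ws) = hd ws" using bne sp by (metis hd_append2)
  moreover have "{last (butlast ws), last ws} \<in> snd G"
  proof -
    obtain a where a: "butlast ws = butlast (butlast ws) @ [a]" "a = last (butlast ws)" using bne by (metis append_butlast_last_id)
    have "is_walk G ([a, last ws])" using walk_suffix[of G "butlast (butlast ws)" "[a, last ws]"] sp a assms(1) by (metis append.assoc append_Cons append_Nil list.discI)
    then show ?thesis using a by simp
  qed
  ultimately show ?thesis using w1 by blast
qed

lemma finite_walks: "finite (fst G) \<Longrightarrow> finite {ws. is_walk G ws \<and> length ws = n \<and> P ws}"
  by (rule finite_subset[OF _ finite_lists_length_eq[of "fst G" n]]) (auto simp: is_walk_def)

lemma walk_count_0: "x \<in> fst G \<Longrightarrow> walk_count 0 x G = 1"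
proof -
  assume x: "x \<in> fst G"
  have "{ws. is_walk G ws \<and> length ws = Suc 0 \<and> hd ws = x} = {[x]}"
    using x by (auto simp: length_Suc_conv)
  then show ?thesis by (simp add: walk_count_def)
qed

lemma walk_count_out: "x \<notin> fst G \<Longrightarrow> walk_count l x G = 0"
proof -
  assume x: "x \<notin> fst G"
  have "{ws. is_walk G ws \<and> length ws = Suc l \<and> hd ws = x} = {}"
  proof -
    have "\<And>ws. is_walk G ws \<Longrightarrow> hd ws \<in> fst G" unfolding is_walk_def by (metis hd_in_set subsetD)
    then show ?thesis using x by blast
  qed
  then show ?thesis unfolding walk_count_def by (metis card.empty)
qed

lemma walk_count_Suc:
  assumes fin: "finite (fst G)" and x: "x \<in> fst G"
  shows "walk_count (Suc l) x G = (\<Sum>y\<in>nbrs G x. walk_count l y G)"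
proof -
  let ?W = "\<lambda>y. {ws. is_walk G ws \<and> length ws = Suc l \<and> hd ws = y}"
  have eq: "{ws. is_walk G ws \<and> length ws = Suc (Suc l) \<and> hd ws = x} = (\<Union>y\<in>nbrs G x. (Cons x) ` ?W y)"
  proof (rule set_eqI, rule iffI)
    fix ws assume "ws \<in> {ws. is_walk G ws \<and> length ws = Suc (Suc l) \<and> hd ws = x}"
    then obtain y ys where ws: "ws = x # y # ys" and w: "is_walk G ws" and len: "length ys = l"
      by (auto simp: length_Suc_conv)
    then have "y \<in> nbrs G x" using w by (auto simp: nbrs_def is_walk_def)
    moreover have "y # ys \<in> ?W y" using w ws len by auto
    ultimately show "ws \<in> (\<Union>y\<in>nbrs G x. (Cons x) ` ?W y)" using ws by blast
  next
    fix ws assume "ws \<in> (\<Union>y\<in>nbrs G x. (Cons x) ` ?W y)"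
    then obtain y zs where y: "y \<in> nbrs G x" and zs: "zs \<in> ?W y" and ws: "ws = x # zs" by blast
    obtain ys where "zs = y # ys" using zs by (cases zs) (auto simp: is_walk_def)
    then show "ws \<in> {ws. is_walk G ws \<and> length ws = Suc (Suc l) \<and> hd ws = x}"
      using y zs ws x by (auto simp: nbrs_def)
  qed
  have finN: "finite (nbrs G x)" using fin by (rule finite_subset[rotated]) (auto simp: nbrs_def)
  have "card (\<Union>y\<in>nbrs G x. (Cons x) ` ?W y) = (\<Sum>y\<in>nbrs G x. card ((Cons x) ` ?W y))"
    by (rule card_UN_disjoint[OF finN]) (auto intro: finite_walks[OF fin])
  also have "\<dots> = (\<Sum>y\<in>nbrs G x. card (?W y))"
    by (rule sum.cong) (auto intro: card_image inj_onI)
  finally show ?thesis using eq by (simp add: walk_count_def)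
qed

lemma walk_count_mono:
  assumes fin: "finite (fst G)" and ne: "\<And>v. v \<in> fst G \<Longrightarrow> nbrs G v \<noteq> {}"
  shows "walk_count n v G \<le> walk_count (Suc n) v G"
proof (induction n arbitrary: v)
  case 0
  show ?case
  proof (cases "v \<in> fst G")
    case True
    have finN: "finite (nbrs G v)" using fin by (rule finite_subset[rotated]) (auto simp: nbrs_def)
    have "walk_count (Suc 0) v G = (\<Sum>y\<in>nbrs G v. 1)"
      using walk_count_Suc[OF fin True] by (simp add: walk_count_0 nbrs_def)
    also have "\<dots> = card (nbrs G v)" by simp
    finally show ?thesis using True ne[OF True] finN walk_count_0[OF True]
      by (simp add: Suc_le_eq card_gt_0_iff)
  qed (simp add: walk_count_out)
next
  case (Suc n)
  show ?case
  proof (cases "v \<in> fst G")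
    case True
    show ?thesis unfolding walk_count_Suc[OF fin True]
      by (rule sum_mono) (rule Suc.IH)
  qed (simp add: walk_count_out)
qed

lemma walk_map:
  assumes w: "is_walk G ws"
    and vm: "\<And>v. v \<in> fst G \<Longrightarrow> f v \<in> fst G'"
    and em: "\<And>x y. x \<in> fst G \<Longrightarrow> y \<in> fst G \<Longrightarrow> {x,y} \<in> snd G \<Longrightarrow> {f x, f y} \<in> snd G'"
  shows "is_walk G' (map f ws)"
proof -
  have s: "set ws \<subseteq> fst G" using walk_set[OF w] .
  have "\<forall>i. Suc i < length (map f ws) \<longrightarrow> {map f ws ! i, map f ws ! Suc i} \<in> snd G'"
  proof (intro allI impI)
    fix i assume "Suc i < length (map f ws)"
    then have i: "Suc i < length ws" by simp
    have a: "ws ! i \<in> fst G" using i s by (meson Suc_lessD nth_mem subsetD)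
    have b: "ws ! Suc i \<in> fst G" using i s by (meson nth_mem subsetD)
    have "{ws ! i, ws ! Suc i} \<in> snd G" using w i unfolding is_walk_def by blast
    then have "{f (ws ! i), f (ws ! Suc i)} \<in> snd G'" using em[OF a b] by blast
    then show "{map f ws ! i, map f ws ! Suc i} \<in> snd G'" using i by simp
  qed
  moreover have "set (map f ws) \<subseteq> fst G'" using s vm by auto
  moreover have "map f ws \<noteq> []" using walk_nonempty[OF w] by simp
  ultimately show ?thesis unfolding is_walk_def by blast
qed

lemma walk_count_hom:
  assumes fin: "finite (fst G')"
    and inj: "inj_on f (fst G)"
    and vm: "\<And>v. v \<in> fst G \<Longrightarrow> f v \<in> fst G'"
    and em: "\<And>x y. x \<in> fst G \<Longrightarrow> y \<in> fst G \<Longrightarrow> {x,y} \<in> snd G \<Longrightarrow> {f x, f y} \<in> snd G'"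
  shows "walk_count l v G \<le> walk_count l (f v) G'"
proof -
  let ?A = "{ws. is_walk G ws \<and> length ws = Suc l \<and> hd ws = v}"
  let ?B = "{ws. is_walk G' ws \<and> length ws = Suc l \<and> hd ws = f v}"
  have sub: "map f ` ?A \<subseteq> ?B"
  proof
    fix zs assume "zs \<in> map f ` ?A"
    then obtain ws where ws: "ws \<in> ?A" and zs: "zs = map f ws" by blast
    have w: "is_walk G ws" using ws by simp
    have "is_walk G' (map f ws)" by (rule walk_map[OF w vm em])
    moreover have "hd (map f ws) = f v" using ws walk_nonempty[OF w] by (simp add: hd_map)
    moreover have "length (map f ws) = Suc l" using ws by simp
    ultimately show "zs \<in> ?B" unfolding zs by blast
  qed
  have injm: "inj_on (map f) ?A"
  proof (rule inj_onI)
    fix xs ys assume a: "xs \<in> ?A" "ys \<in> ?A" "map f xs = map f ys"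
    have "set xs \<union> set ys \<subseteq> fst G" using a(1,2) walk_set by blast
    then have "inj_on f (set xs \<union> set ys)" using inj inj_on_subset by blast
    then show "xs = ys" using inj_on_map_eq_map a(3) by blast
  qed
  have finB: "finite ?B" by (rule finite_walks[OF fin])
  have "card ?A \<le> card ?B" by (rule card_inj_on_le[OF injm sub finB])
  then show ?thesis by (simp add: walk_count_def)
qed




locale cfg =
  fixes T :: "'a graph" and p :: "nat \<Rightarrow> 'a" and k :: nat
  assumes tree: "is_tree T" and k1: "k \<ge> 1" and pinj0: "inj_on p {0..k}"
    and pin: "\<forall>i\<le>k. p i \<in> fst T"
    and pe: "\<forall>i<k. {p i, p (Suc i)} \<in> snd T"
    and deg: "\<forall>i. 1 \<le> i \<and> i < k \<longrightarrow> card (nbrs T (p i)) = 2"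
begin

abbreviation "PE \<equiv> path_edges p k"
abbreviation "B \<equiv> comp_B T p k"
abbreviation "V \<equiv> B \<union> path_verts p k"
abbreviation "N \<equiv> nbrs T (p k) - {p (k - 1)}"
abbreviation "H \<equiv> (fst T, snd T - PE)"

lemma pinj: "i \<le> k \<Longrightarrow> j \<le> k \<Longrightarrow> p i = p j \<longleftrightarrow> i = j"
  using pinj0 by (auto dest: inj_onD)

lemma finT: "finite (fst T)" using tree by (simp add: is_tree_def)

lemma edgeV: "{x,y} \<in> snd T \<Longrightarrow> x \<in> fst T \<and> y \<in> fst T \<and> x \<noteq> y"
  using tree unfolding is_tree_def wf_graph_def by (metis doubleton_eq_iff)

lemma pe': "i < k \<Longrightarrow> {p i, p (Suc i)} \<in> snd T" using pe by blast
lemma pin': "i \<le> k \<Longrightarrow> p i \<in> fst T" using pin by blast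

lemma PE_iff: "e \<in> PE \<longleftrightarrow> (\<exists>i<k. e = {p i, p (Suc i)})"
  by (auto simp: path_edges_def)

lemma PE_I: "i < k \<Longrightarrow> {p i, p (Suc i)} \<in> PE" by (auto simp: PE_iff)
lemma PE_I': "i < k \<Longrightarrow> {p (Suc i), p i} \<in> PE" using PE_I by (metis insert_commute)

lemma nbrs_int: assumes "1 \<le> i" "i < k" shows "nbrs T (p i) = {p (i-1), p (Suc i)}"
proof -
  have "{p (i-1), p i} \<in> snd T" using pe'[of "i-1"] assms by simp
  then have a: "p (i-1) \<in> nbrs T (p i)"
    using pin'[of "i-1"] assms unfolding nbrs_def by (simp add: insert_commute)
  have b: "p (Suc i) \<in> nbrs T (p i)"
    using pe'[of "i"] pin'[of "Suc i"] assms by (auto simp: nbrs_def)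
  have ne: "p (i-1) \<noteq> p (Suc i)" using pinj[of "i-1" "Suc i"] assms by auto
  have fin: "finite (nbrs T (p i))" using finT by (rule finite_subset[rotated]) (auto simp: nbrs_def)
  have c: "card (nbrs T (p i)) = 2" using deg assms by blast
  show ?thesis
    by (rule card_seteq[symmetric, OF fin]) (use a b ne c in auto)
qed

lemma int_edge: "1 \<le> i \<Longrightarrow> i < k \<Longrightarrow> {p i, w} \<in> snd T \<Longrightarrow> {p i, w} \<in> PE"
proof -
  assume a: "1 \<le> i" "i < k" "{p i, w} \<in> snd T"
  then have "w \<in> nbrs T (p i)" using edgeV by (auto simp: nbrs_def)
  then have "w = p (i-1) \<or> w = p (Suc i)" using nbrs_int a by auto
  then show ?thesis
  proof
    assume "w = p (i-1)"
    then show ?thesis using PE_I'[of "i-1"] a by simp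
  next
    assume "w = p (Suc i)"
    then show ?thesis using PE_I[of i] a by simp
  qed
qed

lemma B_iff: "v \<in> B \<longleftrightarrow> reachable H (p k) v" by (simp add: comp_B_def)

lemma B_sub: "v \<in> B \<Longrightarrow> v \<in> fst T"
  unfolding B_iff reachable_def
  by (metis (no_types, lifting) fst_conv last_in_set subsetD walk_nonempty walk_set)

lemma pk_B: "p k \<in> B"
  unfolding B_iff reachable_def
  by (rule exI[of _ "[p k]"]) (use pin' in auto)

lemma B_step: assumes "x \<in> B" "{x,y} \<in> snd T" "{x,y} \<notin> PE" shows "y \<in> B"
proof -
  obtain ws where ws: "is_walk H ws" "hd ws = p k" "last ws = x" using assms(1) unfolding B_iff reachable_def by blast
  have "is_walk H (ws @ [y])"
    by (rule walk_append) (use ws assms edgeV in auto)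
  then show ?thesis unfolding B_iff reachable_def using ws walk_nonempty[OF ws(1)]
    by (intro exI[of _ "ws @ [y]"]) auto
qed

lemma B_back: assumes "v \<in> B" "v \<noteq> p k" shows "\<exists>w\<in>B. {w,v} \<in> snd T \<and> {w,v} \<notin> PE"
proof -
  obtain ws where ws: "is_walk H ws" "hd ws = p k" "last ws = v" using assms(1) unfolding B_iff reachable_def by blast
  have "length ws \<noteq> 1"
  proof
    assume "length ws = 1"
    then obtain x where "ws = [x]" by (auto simp: length_Suc_conv)
    then show False using ws assms(2) by simp
  qed
  moreover have "length ws \<noteq> 0" using walk_nonempty[OF ws(1)] by simp
  ultimately have "length ws \<ge> 2" by linarith
  from walk_last_edge[OF ws(1) this] obtain w where
    w: "is_walk H (butlast ws)" "hd (butlast ws) = hd ws" "last (butlast ws) = w" "{w, last ws} \<in> snd H"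
    by metis
  have "hd (butlast ws) = p k" using w(2) ws(2) by simp
  then have "w \<in> B" unfolding B_iff reachable_def using w(1) w(3) by blast
  moreover have "{w, v} \<in> snd T - PE" using w(4) ws(3) by simp
  ultimately show ?thesis by blast
qed

lemma int_notB: assumes "1 \<le> i" "i < k" shows "p i \<notin> B"
proof
  assume pb: "p i \<in> B"
  have "p i \<noteq> p k" using pinj[of i k] assms by simp
  then obtain w where w: "{w, p i} \<in> snd T" "{w, p i} \<notin> PE" using B_back[OF pb] by blast
  have "{p i, w} \<in> snd T" using w(1) by (metis insert_commute)
  then have "{p i, w} \<in> PE" using int_edge[OF assms, of w] by blast
  then show False using w(2) by (metis insert_commute)
qed

lemma p0_notB: "p 0 \<notin> B"
proof
  assume "p 0 \<in> B"
  then obtain ws where ws: "is_walk H ws" "hd ws = p k" "last ws = p 0" unfolding B_iff reachable_def by blast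
  from walk_distinct[OF ws(1)] obtain ds where
    ds: "is_walk H ds" "distinct ds" "hd ds = p k" "last ds = p 0" using ws by auto
  have pk0: "p k \<noteq> p 0" using pinj[of k 0] k1 by simp
  have dne: "ds \<noteq> []" using walk_nonempty[OF ds(1)] .
  have "length ds \<noteq> 1"
  proof
    assume "length ds = 1"
    then obtain x where "ds = [x]" by (auto simp: length_Suc_conv)
    then show False using ds pk0 by simp
  qed
  moreover have "length ds \<noteq> 0" using dne by simp
  ultimately have len2: "length ds \<ge> 2" by linarith
  have avoid: "p i \<notin> set ds" if "1 \<le> i" "i < k" for i
  proof
    assume "p i \<in> set ds"
    from walk_incident[OF ds(1) len2 this] obtain w where "{p i, w} \<in> snd H" by blast
    then show False using int_edge[OF that, of w] by simp
  qed
  have TT: "T = (fst T, snd T)" by simp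
  have dT: "is_walk T ds" using walk_mono[OF ds(1), of "snd T"] by auto
  define qs where "qs = map p [1..<k]"
  define cs where "cs = ds @ qs"
  have wcs: "is_walk T cs"
  proof (cases "k = 1")
    case True then show ?thesis using dT by (simp add: cs_def qs_def)
  next
    case False
    then have k2: "k \<ge> 2" using k1 by simp
    have wq: "is_walk T qs" unfolding is_walk_def
    proof (intro conjI allI impI)
      show "qs \<noteq> []" using k2 by (simp add: qs_def)
      show "set qs \<subseteq> fst T" using pin by (auto simp: qs_def)
      fix i assume "Suc i < length qs"
      then have "Suc (Suc i) < k" by (simp add: qs_def)
      then show "{qs ! i, qs ! Suc i} \<in> snd T" using pe'[of "Suc i"] by (simp add: qs_def)
    qed
    have "hd qs = p 1" using k2 by (simp add: qs_def hd_map)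
    then have "{last ds, hd qs} \<in> snd T" using ds(4) pe'[of 0] k2 by simp
    then show ?thesis unfolding cs_def by (rule walk_append[OF dT wq])
  qed
  have dq: "distinct qs" unfolding qs_def
    by (rule distinct_map[THEN iffD2]) (auto intro: inj_on_subset[OF pinj0])
  have disj: "set ds \<inter> set qs = {}" using avoid by (auto simp: qs_def)
  have dcs: "distinct cs" using ds(2) dq disj by (simp add: cs_def)
  have lastcs: "last cs = p (k - 1)"
  proof (cases "k = 1")
    case True then show ?thesis using ds(4) by (simp add: cs_def qs_def)
  next
    case False then have "qs \<noteq> []" using k1 by (simp add: qs_def)
    then show ?thesis using False k1 by (simp add: cs_def qs_def last_map)
  qed
  have hdcs: "hd cs = p k" using ds(3) dne by (simp add: cs_def)
  have ecs: "{last cs, hd cs} \<in> snd T" using pe'[of "k-1"] k1 lastcs hdcs by simp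
  have lcs: "length cs \<ge> 3"
  proof (cases "k = 1")
    case False then show ?thesis using len2 k1 by (simp add: cs_def qs_def)
  next
    case True
    have "length ds \<noteq> 2"
    proof
      assume "length ds = 2"
      then obtain a b where ab: "ds = [a, b]" by (auto simp: numeral_2_eq_2 length_Suc_conv)
      then have "a = p 1" "b = p 0" using ds True by auto
      then have "{p 1, p 0} \<in> snd H" using ds(1) ab by simp
      then show False using PE_I'[of 0] True by simp
    qed
    then show ?thesis using len2 True by (simp add: cs_def qs_def)
  qed
  have "has_cycle T" unfolding has_cycle_def using wcs dcs ecs lcs by blast
  then show False using tree by (simp add: is_tree_def)
qed

lemma notB: "i < k \<Longrightarrow> p i \<notin> B"
  using int_notB p0_notB by (cases i) auto

lemma N_B: assumes "u \<in> N" shows "u \<in> B"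
proof (rule B_step[OF pk_B])
  show e: "{p k, u} \<in> snd T" using assms by (simp add: nbrs_def)
  show "{p k, u} \<notin> PE"
  proof
    assume "{p k, u} \<in> PE"
    then obtain j where j: "j < k" "{p k, u} = {p j, p (Suc j)}" by (auto simp: PE_iff)
    have "p k \<noteq> p j" using pinj[of k j] j by simp
    have "p k \<in> {p j, p (Suc j)}" "u \<in> {p j, p (Suc j)}" using j(2) by blast+
    moreover have "u \<noteq> p k" using edgeV e by blast
    ultimately have pu: "p k = p (Suc j) \<and> u = p j" using \<open>p k \<noteq> p j\<close> by (metis empty_iff insert_iff)
    have "Suc j = k" using pinj[of k "Suc j"] j(1) pu by simp
    then have "j = k - 1" by simp
    then have "u = p (k - 1)" using pu by simp
    then show False using assms by simp
  qed
qed


lemma Nedge_notPE: assumes "u \<in> N" shows "{p k, u} \<notin> PE"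
proof
  assume "{p k, u} \<in> PE"
  then obtain j where j: "j < k" "{p k, u} = {p j, p (Suc j)}" by (auto simp: PE_iff)
  have e: "{p k, u} \<in> snd T" using assms by (simp add: nbrs_def)
  have "p k \<noteq> p j" using pinj[of k j] j by simp
  have "p k \<in> {p j, p (Suc j)}" "u \<in> {p j, p (Suc j)}" using j(2) by blast+
  moreover have "u \<noteq> p k" using edgeV e by blast
  ultimately have pu: "p k = p (Suc j) \<and> u = p j" using \<open>p k \<noteq> p j\<close> by (metis empty_iff insert_iff)
  have "Suc j = k" using pinj[of k "Suc j"] j(1) pu by simp
  then have "j = k - 1" by simp
  then have "u = p (k - 1)" using pu by simp
  then show False using assms by simp
qed

abbreviation "G \<equiv> induced T V"
abbreviation "G' \<equiv> induced (moved_tree T p k) V"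

lemma pV: "i \<le> k \<Longrightarrow> p i \<in> V" by (auto simp: path_verts_def)
lemma V_cases: "v \<in> V \<Longrightarrow> v \<in> B \<or> (\<exists>i\<le>k. v = p i)" by (auto simp: path_verts_def)
lemma V_sub: "V \<subseteq> fst T" using B_sub pin by (auto simp: path_verts_def)
lemma fstG: "fst G = V" using V_sub by (auto simp: induced_def)
lemma fstG': "fst G' = V" using V_sub by (auto simp: induced_def moved_tree_def Let_def)
lemma sndG: "snd G = {e \<in> snd T. e \<subseteq> V}" by (simp add: induced_def)
lemma sndG': "snd G' = {e \<in> snd (moved_tree T p k). e \<subseteq> V}" by (simp add: induced_def)
lemma snd_moved: "snd (moved_tree T p k) = (snd T - (\<lambda>u. {p k, u}) ` N) \<union> (\<lambda>u. {p 0, u}) ` N"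
  by (simp add: moved_tree_def Let_def)
lemma finG: "finite (fst G)" using finT V_sub fstG finite_subset by metis
lemma finG': "finite (fst G')" using finT V_sub fstG' finite_subset by metis

lemma nbrsG: "x \<in> V \<Longrightarrow> nbrs G x = {u \<in> V. {x,u} \<in> snd T}"
  by (auto simp: nbrs_def fstG sndG)

lemma finNG: "finite (nbrs G x)"
  using finG by (rule finite_subset[rotated]) (auto simp: nbrs_def)

lemma G1: assumes y: "y \<in> V" and e: "{p 0, y} \<in> snd T" shows "y = p 1"
proof (cases "{p 0, y} \<in> PE")
  case True
  then obtain j where j: "j < k" "{p 0, y} = {p j, p (Suc j)}" by (auto simp: PE_iff)
  have "p 0 \<noteq> p (Suc j)" using pinj[of 0 "Suc j"] j by simp
  moreover have "p 0 \<in> {p j, p (Suc j)}" using j(2) by blast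
  ultimately have "p 0 = p j" by blast
  then have j0: "j = 0" using pinj[of 0 j] j by simp
  have "y \<in> {p j, p (Suc j)}" using j(2) by blast
  moreover have "y \<noteq> p 0" using edgeV e by blast
  ultimately have "y = p (Suc j)" using \<open>p 0 = p j\<close> by (metis empty_iff insert_iff)
  then show ?thesis using j0 by simp
next
  case False
  have e': "{y, p 0} \<in> snd T" using e by (metis insert_commute)
  have nPE: "{y, p 0} \<notin> PE" using False by (metis insert_commute)
  have "y \<notin> B" using B_step[OF _ e' nPE] p0_notB by blast
  then obtain i where i: "i \<le> k" "y = p i" using V_cases[OF y] by blast
  have "i \<noteq> k" using pk_B i \<open>y \<notin> B\<close> by blast
  moreover have "i \<noteq> 0" using edgeV[OF e] i by (metis)
  ultimately have "1 \<le> i" "i < k" using i by auto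
  then have "{p i, p 0} \<in> PE" using int_edge e' i by blast
  then show ?thesis using nPE i by simp
qed

lemma cls: assumes "x \<in> V" "y \<in> V" "{x,y} \<in> snd T" "{x,y} \<notin> PE" shows "x \<in> B"
proof -
  { assume "x \<notin> B"
    then obtain i where i: "i \<le> k" "x = p i" using V_cases[OF assms(1)] by blast
    have "i \<noteq> k" using pk_B i \<open>x \<notin> B\<close> by blast
    have False
    proof (cases "i = 0")
      case True
      then have "y = p 1" using G1 assms i by simp
      then show False using PE_I[of 0] k1 assms(4) i True by simp
    next
      case False
      then have "1 \<le> i" "i < k" using i \<open>i \<noteq> k\<close> by auto
      then show False using int_edge assms i by blast
    qed }
  then show ?thesis by blast
qed

lemma nbrsG_0: "nbrs G (p 0) = {p 1}"
proof -
  have "p 1 \<in> nbrs G (p 0)" using nbrsG[OF pV[of 0]] pV[of 1] pe'[of 0] k1 by simp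
  moreover have "u = p 1" if "u \<in> nbrs G (p 0)" for u
    using that nbrsG[OF pV[of 0]] G1 by blast
  ultimately show ?thesis by blast
qed

lemma nbrsG_int: assumes "1 \<le> i" "i < k" shows "nbrs G (p i) = {p (i-1), p (Suc i)}"
proof -
  have "nbrs G (p i) = {u \<in> V. u \<in> nbrs T (p i)}"
    using nbrsG[OF pV[of i]] assms V_sub by (auto simp: nbrs_def)
  also have "\<dots> = {p (i-1), p (Suc i)}"
    using nbrs_int[OF assms] pV[of "i-1"] pV[of "Suc i"] assms by auto
  finally show ?thesis .
qed

lemma nbrsG_k1: "p (k-1) \<in> nbrs G (p k)"
proof -
  have "{p (k-1), p k} \<in> snd T" using pe'[of "k-1"] k1 by simp
  then have "{p k, p (k-1)} \<in> snd T" by (metis insert_commute)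
  then show ?thesis using nbrsG[OF pV[of k]] pV[of "k-1"] by simp
qed

lemma nbrsG_kN: "u \<in> N \<Longrightarrow> u \<in> nbrs G (p k)"
  using nbrsG[OF pV[of k]] N_B by (auto simp: nbrs_def)

lemma nbrsG_Nk: "u \<in> N \<Longrightarrow> p k \<in> nbrs G u"
proof -
  assume u: "u \<in> N"
  then have "{p k, u} \<in> snd T" by (simp add: nbrs_def)
  then have "{u, p k} \<in> snd T" by (metis insert_commute)
  then show ?thesis using nbrsG[of u] N_B[OF u] pV[of k] by simp
qed

lemma nonisol: assumes "v \<in> fst G" shows "nbrs G v \<noteq> {}"
proof -
  have v: "v \<in> V" using assms fstG by simp
  show ?thesis
  proof (cases "v = p k")
    case True then show ?thesis using nbrsG_k1 by blast
  next
    case False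
    show ?thesis
    proof (cases "v \<in> B")
      case True
      then obtain w where w: "w \<in> B" "{w,v} \<in> snd T" using B_back False by blast
      then have "{v,w} \<in> snd T" by (metis insert_commute)
      then have "w \<in> nbrs G v" using nbrsG[OF v] w(1) by simp
      then show ?thesis by blast
    next
      case nb: False
      then obtain i where i: "i \<le> k" "v = p i" using V_cases[OF v] by blast
      then have "i \<noteq> k" using False by blast
      then have "i < k" using i by simp
      then have "p (Suc i) \<in> nbrs G v" using nbrsG[OF v] pV[of "Suc i"] pe'[of i] i by simp
      then show ?thesis by blast
    qed
  qed
qed

lemma wc_Suc: "v \<in> V \<Longrightarrow> walk_count (Suc l) v G = (\<Sum>y\<in>nbrs G v. walk_count l y G)"
  by (rule walk_count_Suc[OF finG]) (simp add: fstG)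

lemma wc_0: "v \<in> V \<Longrightarrow> walk_count 0 v G = 1"
  by (rule walk_count_0) (simp add: fstG)

lemma refl_even: assumes km: "k = 2*m"
  shows "i \<le> m \<Longrightarrow> walk_count l (p i) G \<le> walk_count l (p (k-i)) G"
proof (induction l arbitrary: i)
  case 0 then show ?case using wc_0 pV km by simp
next
  case (Suc l)
  show ?case
  proof (cases "i = m")
    case True then show ?thesis using km by simp
  next
    case ne: False
    show ?thesis
    proof (cases "i = 0")
      case True
      have m1: "1 \<le> m" using km k1 by simp
      have "walk_count (Suc l) (p i) G = walk_count l (p 1) G"
        using wc_Suc[OF pV[of 0]] nbrsG_0 True by simp
      also have "\<dots> \<le> walk_count l (p (k-1)) G" using Suc.IH[of 1] m1 by simp
      also have "\<dots> \<le> (\<Sum>y\<in>nbrs G (p k). walk_count l y G)"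
        by (rule member_le_sum[OF nbrsG_k1 _ finNG]) simp
      also have "\<dots> = walk_count (Suc l) (p (k - i)) G" using wc_Suc[OF pV[of k]] True by simp
      finally show ?thesis .
    next
      case False
      have i: "1 \<le> i" "i < k" "i < m" using False ne Suc.prems km by auto
      have j: "1 \<le> k - i" "k - i < k" using i km by auto
      have d1: "p (i-1) \<noteq> p (Suc i)" using pinj[of "i-1" "Suc i"] i by simp
      have d2: "p (k-i-1) \<noteq> p (Suc (k-i))" using pinj[of "k-i-1" "Suc (k-i)"] j by simp
      have "walk_count (Suc l) (p i) G = walk_count l (p (i-1)) G + walk_count l (p (Suc i)) G"
        using wc_Suc[OF pV[of i]] nbrsG_int[OF i(1,2)] d1 i by simp
      also have "\<dots> \<le> walk_count l (p (Suc (k-i))) G + walk_count l (p (k-i-1)) G"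
      proof (rule add_mono)
        have h1: "i - 1 \<le> m" using i by linarith
        have e1: "k - (i - 1) = Suc (k - i)" using i by linarith
        show "walk_count l (p (i-1)) G \<le> walk_count l (p (Suc (k-i))) G"
          using Suc.IH[OF h1] unfolding e1 .
        have h2: "Suc i \<le> m" using i by linarith
        have e2: "k - Suc i = k - i - 1" by linarith
        show "walk_count l (p (Suc i)) G \<le> walk_count l (p (k-i-1)) G"
          using Suc.IH[OF h2] unfolding e2 .
      qed
      also have "\<dots> = walk_count (Suc l) (p (k-i)) G"
        using wc_Suc[OF pV[of "k-i"]] nbrsG_int[OF j] d2 j by simp
      finally show ?thesis .
    qed
  qed
qed


lemma refl_odd: assumes km: "k = 2*m+1" and u: "u \<in> N"
  shows "walk_count l (p 0) G \<le> walk_count l u G \<and>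
         (\<forall>i. 1 \<le> i \<and> i \<le> m+1 \<longrightarrow> walk_count l (p i) G \<le> walk_count l (p (k+1-i)) G)"
proof (induction l)
  case 0
  have uV: "u \<in> V" using N_B[OF u] by simp
  have a: "\<And>v. v \<in> V \<Longrightarrow> walk_count 0 v G = 1" by (rule wc_0)
  show ?case
  proof (intro conjI allI impI)
    show "walk_count 0 (p 0) G \<le> walk_count 0 u G" using a[OF pV[of 0]] a[OF uV] by simp
    fix i assume "1 \<le> i \<and> i \<le> m+1"
    then have "i \<le> k" "k+1-i \<le> k" using km by auto
    then show "walk_count 0 (p i) G \<le> walk_count 0 (p (k+1-i)) G"
      using a[OF pV[of i]] a[OF pV[of "k+1-i"]] by simp
  qed
next
  case (Suc l)
  have IH1: "walk_count l (p 0) G \<le> walk_count l u G" using Suc.IH by blast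
  have IH2: "\<And>i. 1 \<le> i \<Longrightarrow> i \<le> m+1 \<Longrightarrow> walk_count l (p i) G \<le> walk_count l (p (k+1-i)) G"
    using Suc.IH by blast
  have uV: "u \<in> V" using N_B[OF u] by simp
  have A: "walk_count (Suc l) (p 0) G \<le> walk_count (Suc l) u G"
  proof -
    have "walk_count (Suc l) (p 0) G = walk_count l (p 1) G"
      using wc_Suc[OF pV[of 0]] nbrsG_0 by simp
    also have "\<dots> \<le> walk_count l (p k) G" using IH2[of 1] km by simp
    also have "\<dots> \<le> (\<Sum>y\<in>nbrs G u. walk_count l y G)"
      by (rule member_le_sum[OF nbrsG_Nk[OF u] _ finNG]) simp
    also have "\<dots> = walk_count (Suc l) u G" using wc_Suc[OF uV] by simp
    finally show ?thesis .
  qed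
  have Bi: "walk_count (Suc l) (p i) G \<le> walk_count (Suc l) (p (k+1-i)) G"
    if i: "1 \<le> i" "i \<le> m+1" for i
  proof (cases "i = m+1")
    case True then show ?thesis using km by simp
  next
    case ne: False
    then have im: "i \<le> m" using i by simp
    show ?thesis
    proof (cases "i = 1")
      case True
      have m1: "1 \<le> m" using im True by simp
      have ik: "1 < k" using km m1 by simp
      have d1: "p 0 \<noteq> p 2" using pinj[of 0 2] ik km by simp
      have n1: "nbrs G (p 1) = {p 0, p 2}" using nbrsG_int[of 1] ik by (simp add: numeral_2_eq_2)
      have un: "u \<noteq> p (k-1)" using u by simp
      have sub: "{u, p (k-1)} \<subseteq> nbrs G (p k)" using nbrsG_kN[OF u] nbrsG_k1 by simp
      have "walk_count (Suc l) (p i) G = walk_count l (p 0) G + walk_count l (p 2) G"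
        using wc_Suc[OF pV[of 1]] n1 d1 True k1 by simp
      also have "\<dots> \<le> walk_count l u G + walk_count l (p (k-1)) G"
      proof (rule add_mono)
        show "walk_count l (p 0) G \<le> walk_count l u G" by (rule IH1)
        have e: "k + 1 - 2 = k - 1" by simp
        show "walk_count l (p 2) G \<le> walk_count l (p (k-1)) G"
          using IH2[of 2] m1 unfolding e by simp
      qed
      also have "\<dots> = (\<Sum>y\<in>{u, p (k-1)}. walk_count l y G)" using un by simp
      also have "\<dots> \<le> (\<Sum>y\<in>nbrs G (p k). walk_count l y G)"
        by (rule sum_mono2[OF finNG sub]) simp
      also have "\<dots> = walk_count (Suc l) (p (k+1-i)) G" using wc_Suc[OF pV[of k]] True by simp
      finally show ?thesis .
    next
      case False
      have ii: "2 \<le> i" "i < k" using False i im km by auto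
      have j: "1 \<le> k+1-i" "k+1-i < k" using ii km by auto
      have d1: "p (i-1) \<noteq> p (Suc i)" using pinj[of "i-1" "Suc i"] ii by simp
      have d2: "p (k+1-i-1) \<noteq> p (Suc (k+1-i))" using pinj[of "k+1-i-1" "Suc (k+1-i)"] j by simp
      have "walk_count (Suc l) (p i) G = walk_count l (p (i-1)) G + walk_count l (p (Suc i)) G"
        using wc_Suc[OF pV[of i]] nbrsG_int[of i] ii d1 by simp
      also have "\<dots> \<le> walk_count l (p (Suc (k+1-i))) G + walk_count l (p (k+1-i-1)) G"
      proof (rule add_mono)
        have h1: "1 \<le> i - 1" "i - 1 \<le> m+1" using ii im by linarith+
        have e1: "k + 1 - (i - 1) = Suc (k + 1 - i)" using ii by linarith
        show "walk_count l (p (i-1)) G \<le> walk_count l (p (Suc (k+1-i))) G"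
          using IH2[OF h1] unfolding e1 .
        have h2: "1 \<le> Suc i" "Suc i \<le> m+1" using ii im by linarith+
        have e2: "k + 1 - Suc i = k + 1 - i - 1" by linarith
        show "walk_count l (p (Suc i)) G \<le> walk_count l (p (k+1-i-1)) G"
          using IH2[OF h2] unfolding e2 .
      qed
      also have "\<dots> = walk_count (Suc l) (p (k+1-i)) G"
        using wc_Suc[OF pV[of "k+1-i"]] nbrsG_int[OF j] d2 j by simp
      finally show ?thesis .
    qed
  qed
  show ?case using A Bi by blast
qed

lemma core: assumes l: "1 \<le> l" and c: "even k \<or> N \<noteq> {}"
  shows "walk_count l (p 0) G \<le> walk_count l (p k) G"
proof (cases "even k")
  case True
  then obtain m where km: "k = 2*m" by blast
  show ?thesis using refl_even[OF km, of 0] by simp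
next
  case False
  then obtain m where km: "k = 2*m+1" using oddE by blast
  obtain u where u: "u \<in> N" using c False by blast
  obtain l' where l': "l = Suc l'" using l by (cases l) auto
  have "walk_count l (p 0) G = walk_count l' (p 1) G"
    using wc_Suc[OF pV[of 0]] nbrsG_0 l' by simp
  also have "\<dots> \<le> walk_count l' (p k) G"
  proof -
    have "\<forall>i. 1 \<le> i \<and> i \<le> m+1 \<longrightarrow> walk_count l' (p i) G \<le> walk_count l' (p (k+1-i)) G"
      using refl_odd[OF km u, of l'] by blast
    moreover have "1 \<le> (1::nat) \<and> (1::nat) \<le> m+1" by simp
    ultimately have "walk_count l' (p 1) G \<le> walk_count l' (p (k+1-1)) G" by blast
    then show ?thesis by simp
  qed
  also have "\<dots> \<le> walk_count l (p k) G"
    unfolding l' by (rule walk_count_mono[OF finG nonisol])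
  finally show ?thesis .
qed

definition sig :: "'a \<Rightarrow> 'a" where
  "sig v = (if v \<in> p ` {0..k} then p (k - inv_into {0..k} p v) else v)"

lemma sig_p: "i \<le> k \<Longrightarrow> sig (p i) = p (k - i)"
  unfolding sig_def using inv_into_f_f[OF pinj0, of i] by simp

lemma sig_np: "v \<notin> p ` {0..k} \<Longrightarrow> sig v = v"
  unfolding sig_def by simp

lemma B_np: "v \<in> B \<Longrightarrow> v \<noteq> p k \<Longrightarrow> v \<notin> p ` {0..k}"
proof
  assume "v \<in> B" "v \<noteq> p k" "v \<in> p ` {0..k}"
  then obtain i where i: "i \<le> k" "v = p i" by auto
  then have "i < k" using \<open>v \<noteq> p k\<close> by (metis le_neq_implies_less)
  then show False using notB \<open>v \<in> B\<close> i by blast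
qed

lemma sigV: "v \<in> V \<Longrightarrow> sig v \<in> V"
proof -
  assume v: "v \<in> V"
  show ?thesis
  proof (cases "v \<in> p ` {0..k}")
    case True
    then obtain i where "i \<le> k" "v = p i" by auto
    then show ?thesis using sig_p pV by simp
  next
    case False then show ?thesis using sig_np v by simp
  qed
qed

lemma sig_inj: "inj_on sig V"
proof (rule inj_onI)
  fix x y assume x: "x \<in> V" and y: "y \<in> V" and e: "sig x = sig y"
  show "x = y"
  proof (cases "x \<in> p ` {0..k}")
    case True
    then obtain i where i: "i \<le> k" "x = p i" by auto
    show ?thesis
    proof (cases "y \<in> p ` {0..k}")
      case True
      then obtain j where j: "j \<le> k" "y = p j" by auto
      have "p (k - i) = p (k - j)" using e i j sig_p by simp
      then have "k - i = k - j" using pinj[of "k-i" "k-j"] by simp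
      then have "i = j" using i(1) j(1) by linarith
      then show ?thesis using i j by simp
    next
      case False
      then have "sig y = y" using sig_np by simp
      then have "y = p (k - i)" using e i sig_p by simp
      then show ?thesis using False by auto
    qed
  next
    case False
    then have sx: "sig x = x" using sig_np by simp
    show ?thesis
    proof (cases "y \<in> p ` {0..k}")
      case True
      then obtain j where j: "j \<le> k" "y = p j" by auto
      have "x = p (k - j)" using e j sig_p sx by simp
      then show ?thesis using False by auto
    next
      case False
      then show ?thesis using e sx sig_np by simp
    qed
  qed
qed

lemma EL: assumes x: "x \<in> V" and y: "y \<in> V" and e: "{x,y} \<in> snd T"
  shows "{sig x, sig y} \<in> snd (moved_tree T p k)"
proof (cases "{x,y} \<in> PE")
  case True
  then obtain j where j: "j < k" "{x,y} = {p j, p (Suc j)}" by (auto simp: PE_iff)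
  have "{sig x, sig y} = sig ` {x,y}" by simp
  also have "\<dots> = {sig (p j), sig (p (Suc j))}" using j(2) by simp
  also have "\<dots> = {p (k - Suc j), p (Suc (k - Suc j))}"
  proof -
    have "sig (p j) = p (Suc (k - Suc j))" using sig_p[of j] j(1) by (simp add: Suc_diff_Suc)
    moreover have "sig (p (Suc j)) = p (k - Suc j)" using sig_p[of "Suc j"] j(1) by simp
    ultimately show ?thesis by (simp add: insert_commute)
  qed
  finally have eq: "{sig x, sig y} = {p (k - Suc j), p (Suc (k - Suc j))}" .
  have kj: "k - Suc j < k" using j(1) by simp
  have inE: "{sig x, sig y} \<in> snd T" using eq pe'[OF kj] by simp
  have inPE: "{sig x, sig y} \<in> PE" using eq PE_I[OF kj] by simp
  have "{sig x, sig y} \<notin> (\<lambda>u. {p k, u}) ` N"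
  proof
    assume "{sig x, sig y} \<in> (\<lambda>u. {p k, u}) ` N"
    then obtain u where "u \<in> N" "{sig x, sig y} = {p k, u}" by blast
    then show False using inPE Nedge_notPE by metis
  qed
  then show ?thesis using inE snd_moved by simp
next
  case False
  have xB: "x \<in> B" using cls[OF x y e False] .
  have e': "{y,x} \<in> snd T" using e by (metis insert_commute)
  have F': "{y,x} \<notin> PE" using False by (metis insert_commute)
  have yB: "y \<in> B" using cls[OF y x e' F'] .
  have xy: "x \<noteq> y" using edgeV[OF e] by blast
  have pk1: "p (k-1) \<notin> B" using notB[of "k-1"] k1 by simp
  show ?thesis
  proof (cases "x = p k")
    case True
    then have yk: "y \<noteq> p k" using xy by simp
    have sy: "sig y = y" using sig_np B_np[OF yB yk] by simp
    have sx: "sig x = p 0" using True sig_p[of k] by simp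
    have "y \<in> N" using e True edgeV[OF e] yB pk1 by (auto simp: nbrs_def)
    then have "{p 0, y} \<in> (\<lambda>u. {p 0, u}) ` N" by blast
    then show ?thesis using sx sy snd_moved by simp
  next
    case xk: False
    have sx: "sig x = x" using sig_np B_np[OF xB xk] by simp
    show ?thesis
    proof (cases "y = p k")
      case True
      have sy: "sig y = p 0" using True sig_p[of k] by simp
      have "x \<in> N" using e' True edgeV[OF e] xB pk1 by (auto simp: nbrs_def)
      then have "{p 0, x} \<in> (\<lambda>u. {p 0, u}) ` N" by blast
      then have "{x, p 0} \<in> (\<lambda>u. {p 0, u}) ` N" by (metis insert_commute)
      then show ?thesis using sx sy snd_moved by simp
    next
      case yk: False
      have sy: "sig y = y" using sig_np B_np[OF yB yk] by simp
      have "{x,y} \<notin> (\<lambda>u. {p k, u}) ` N" using xk yk by (auto simp: doubleton_eq_iff)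
      then show ?thesis using sx sy e snd_moved by simp
    qed
  qed
qed

lemma hom: "walk_count l (p k) G \<le> walk_count l (p 0) G'"
proof -
  have "walk_count l (p k) G \<le> walk_count l (sig (p k)) G'"
  proof (rule walk_count_hom[OF finG'])
    show "inj_on sig (fst G)" using sig_inj fstG by simp
    show "\<And>v. v \<in> fst G \<Longrightarrow> sig v \<in> fst G'" using sigV fstG fstG' by simp
    show "\<And>x y. x \<in> fst G \<Longrightarrow> y \<in> fst G \<Longrightarrow> {x,y} \<in> snd G \<Longrightarrow> {sig x, sig y} \<in> snd G'"
    proof -
      fix x y assume a: "x \<in> fst G" "y \<in> fst G" "{x,y} \<in> snd G"
      then have xy: "x \<in> V" "y \<in> V" "{x,y} \<in> snd T" using fstG sndG by auto
      have "{sig x, sig y} \<in> snd (moved_tree T p k)" by (rule EL[OF xy])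
      moreover have "{sig x, sig y} \<subseteq> V" using sigV xy by simp
      ultimately show "{sig x, sig y} \<in> snd G'" using sndG' by simp
    qed
  qed
  then show ?thesis using sig_p[of k] by simp
qed

lemma moved_empty: assumes e: "N = {}" shows "moved_tree T p k = T"
  unfolding moved_tree_def Let_def e by simp

lemma main: "1 \<le> l \<Longrightarrow> walk_count l (p 0) G \<le> walk_count l (p 0) G'"
proof -
  assume l: "1 \<le> l"
  show ?thesis
  proof (cases "N = {}")
    case True then show ?thesis using moved_empty by simp
  next
    case False
    then show ?thesis using core[OF l] hom[of l] by (meson le_trans)
  qed
qed

end

theorem corollary5:
  fixes T :: "'a graph" and p :: "nat \<Rightarrow> 'a" and k l :: nat
  assumes "is_tree T"
    and "k \<ge> 1"
    and "inj_on p {0..k}"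
    and "\<forall>i\<le>k. p i \<in> fst T"
    and "\<forall>i<k. {p i, p (Suc i)} \<in> snd T"
    and "\<forall>i. 1 \<le> i \<and> i < k \<longrightarrow> card (nbrs T (p i)) = 2"
    and "l \<ge> 1"
  shows "int (walk_count l (p 0) (induced T (comp_B T p k \<union> path_verts p k)))
           - int (walk_count l (p 0) (path_graph p k))
         \<le> int (walk_count l (p 0) (induced (moved_tree T p k) (comp_B T p k \<union> path_verts p k)))
           - int (walk_count l (p 0) (path_graph p k))"
proof -
  interpret cfg T p k
    by (rule cfg.intro) (use assms in auto)
  have "walk_count l (p 0) (induced T (comp_B T p k \<union> path_verts p k))
        \<le> walk_count l (p 0) (induced (moved_tree T p k) (comp_B T p k \<union> path_verts p k))"
    by (rule main[OF assms(7)])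
  then show ?thesis by simp
qed

end
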